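(* Consider the two-user scalar fading multiple access channel and the low-level game described in the context. For every measurable set $D_1\subseteq(0,\infty)^2$ (the base-station strategy) and every fading distribution satisfying the standing assumptions, the low-level power allocation game induced by $D_1$ has a (pure-strategy) Nash equilibrium.
   Context: Channel: $y=\sqrt{h_1}x_1+\sqrt{h_2}x_2+z$, noise variance $\sigma^2>0$; the fading $\mathbf h=(h_1,h_2)$ is stationary ergodic with a stationary distribution on $(0,\infty)^2$ having a continuous bounded density $f$; channel state is known to all transmitters and the receiver. User $i$ has average power budget $\bar P_i>0$; its feasible set is $\mathcal F_i=\{\mathcal P_i:(0,\infty)^2\to[0,\infty)\ \text{measurable}: E[\mathcal P_i(\mathbf h)]\le\bar P_i\}$. The base station uses successive decoding: for states $(h_1,h_2)\in D_1$ it decodes user 1 first, for states in $D_1^c$ it decodes user 2 first. Given $D_1$, the low-level game has the two users as players with strategy sets $\mathcal F_1,\mathcal F_2$ and payoffs $\bar R_1(D_1,\mathcal P_1,\mathcal P_2)=\iint\tfrac12\log_2\Big(1+\frac{\mathcal P_1(h_1,h_2)h_1}{\sigma^2+\mathcal P_2(h_1,h_2)h_2\,I_{\{(h_1,h_2)\in D_1\}}}\Big)f(h_1,h_2)\,dh_1dh_2$, $\bar R_2(D_1,\mathcal P_1,\mathcal P_2)=\iint\tfrac12\log_2\Big(1+\frac{\mathcal P_2(h_1,h_2)h_2}{\sigma^2+\mathcal P_1(h_1,h_2)h_1\,I_{\{(h_1,h_2)\in D_1^c\}}}\Big)f(h_1,h_2)\,dh_1dh_2$, where $I$ is the indicator function.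 A Nash equilibrium is a pair $(\mathcal P_1^*,\mathcal P_2^* )$ such that neither user can increase its own payoff by unilaterally changing its policy within its feasible set. *)

theory Defs
  imports "HOL-Analysis.Analysis"
begin

definition state_space :: "(real \<times> real) set" where
  "state_space = {0<..} \<times> {0<..}"

definition fading_density :: "(real \<times> real \<Rightarrow> real) \<Rightarrow> bool" where
  "fading_density f \<longleftrightarrow>
     f \<in> borel_measurable borel \<and>
     (\<forall>h\<in>state_space. 0 \<le> f h) \<and>
     continuous_on state_space f \<and>
     (\<exists>B. \<forall>h\<in>state_space. \<bar>f h\<bar> \<le> B) \<and>
     (\<integral>\<^sup>+ h\<in>state_space. ennreal (f h) \<partial>lborel) = 1"

definition feasible :: "(real \<times> real \<Rightarrow> real) \<Rightarrow> real \<Rightarrow> (real \<times> real \<Rightarrow> real) \<Rightarrow> bool" where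
  "feasible f Pbar P \<longleftrightarrow>
     P \<in> borel_measurable borel \<and>
     (\<forall>h\<in>state_space. 0 \<le> P h) \<and>
     (\<integral>\<^sup>+ h\<in>state_space. ennreal (P h * f h) \<partial>lborel) \<le> ennreal Pbar"

text \<open>Average rates (possibly infinite, hence valued in ennreal) of users 1 and 2 under
  successive decoding: user 1 decoded first on D1, user 2 decoded first on the complement.\<close>
definition rate1 :: "(real \<times> real \<Rightarrow> real) \<Rightarrow> real \<Rightarrow> (real \<times> real) set
    \<Rightarrow> (real \<times> real \<Rightarrow> real) \<Rightarrow> (real \<times> real \<Rightarrow> real) \<Rightarrow> ennreal" where
  "rate1 f \<sigma>2 D1 P1 P2 =
     (\<integral>\<^sup>+ h\<in>state_space.
        ennreal (1/2 * log 2 (1 + P1 h * fst h /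
                   (\<sigma>2 + P2 h * snd h * indicator D1 h)) * f h) \<partial>lborel)"

definition rate2 :: "(real \<times> real \<Rightarrow> real) \<Rightarrow> real \<Rightarrow> (real \<times> real) set
    \<Rightarrow> (real \<times> real \<Rightarrow> real) \<Rightarrow> (real \<times> real \<Rightarrow> real) \<Rightarrow> ennreal" where
  "rate2 f \<sigma>2 D1 P1 P2 =
     (\<integral>\<^sup>+ h\<in>state_space.
        ennreal (1/2 * log 2 (1 + P2 h * snd h /
                   (\<sigma>2 + P1 h * fst h * indicator (- D1) h)) * f h) \<partial>lborel)"

definition nash_equilibrium :: "(real \<times> real \<Rightarrow> real) \<Rightarrow> real \<Rightarrow> real \<Rightarrow> real \<Rightarrow> (real \<times> real) set
    \<Rightarrow> (real \<times> real \<Rightarrow> real) \<Rightarrow> (real \<times> real \<Rightarrow> real) \<Rightarrow> bool" where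
  "nash_equilibrium f \<sigma>2 Pbar1 Pbar2 D1 P1 P2 \<longleftrightarrow>
     feasible f Pbar1 P1 \<and> feasible f Pbar2 P2 \<and>
     (\<forall>Q1. feasible f Pbar1 Q1 \<longrightarrow> rate1 f \<sigma>2 D1 Q1 P2 \<le> rate1 f \<sigma>2 D1 P1 P2) \<and>
     (\<forall>Q2. feasible f Pbar2 Q2 \<longrightarrow> rate2 f \<sigma>2 D1 P1 Q2 \<le> rate2 f \<sigma>2 D1 P1 P2)"

end

theory Submission
  imports Defs
begin


lemma fd_meas: "fading_density f \<Longrightarrow> f \<in> borel_measurable borel"
  by (simp add: fading_density_def)

lemma fd_nonneg: "fading_density f \<Longrightarrow> h \<in> state_space \<Longrightarrow> 0 \<le> f h"
  by (simp add: fading_density_def)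

lemma fd_one: "fading_density f \<Longrightarrow> (\<integral>\<^sup>+ h\<in>state_space. ennreal (f h) \<partial>lborel) = 1"
  by (simp add: fading_density_def)

lemma ss_meas[measurable]: "state_space \<in> sets borel"
  unfolding state_space_def by (intro borel_open open_Times) auto

lemma E_const:
  assumes "fading_density f" "0 \<le> c"
  shows "(\<integral>\<^sup>+ h\<in>state_space. ennreal (c * f h) \<partial>lborel) = ennreal c"
proof -
  have "(\<integral>\<^sup>+ h\<in>state_space. ennreal (c * f h) \<partial>lborel) =
        (\<integral>\<^sup>+ h. ennreal c * (ennreal (f h) * indicator state_space h) \<partial>lborel)"
    by (intro nn_integral_cong) (auto simp: indicator_def ennreal_mult assms fd_nonneg)
  also have "\<dots> = ennreal c * (\<integral>\<^sup>+ h\<in>state_space. ennreal (f h) \<partial>lborel)"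
    using fd_meas[OF assms(1)] by (intro nn_integral_cmult) simp
  finally show ?thesis using fd_one[OF assms(1)] by simp
qed

lemma E_mono_lip:
  assumes "fading_density f" "0 \<le> d"
    and "P \<in> borel_measurable borel" "Q \<in> borel_measurable borel"
    and "\<And>h. h \<in> state_space \<Longrightarrow> P h \<le> Q h + d"
    and "\<And>h. h \<in> state_space \<Longrightarrow> 0 \<le> Q h"
  shows "(\<integral>\<^sup>+ h\<in>state_space. ennreal (P h * f h) \<partial>lborel) \<le>
         (\<integral>\<^sup>+ h\<in>state_space. ennreal (Q h * f h) \<partial>lborel) + ennreal d"
proof -
  have "(\<integral>\<^sup>+ h\<in>state_space. ennreal (P h * f h) \<partial>lborel) \<le>
        (\<integral>\<^sup>+ h. ennreal (Q h * f h) * indicator state_space h + ennreal (d * f h) * indicator state_space h \<partial>lborel)"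
  proof (intro nn_integral_mono)
    fix h show "ennreal (P h * f h) * indicator state_space h \<le> ennreal (Q h * f h) * indicator state_space h + ennreal (d * f h) * indicator state_space h"
    proof (cases "h \<in> state_space")
      case True
      have "P h * f h \<le> Q h * f h + d * f h"
        using assms(5)[OF True] fd_nonneg[OF assms(1) True]
        by (metis distrib_right mult_right_mono)
      then show ?thesis using True assms(6)[OF True] fd_nonneg[OF assms(1) True] assms(2)
        by (simp add: ennreal_plus[symmetric] ennreal_leI del: ennreal_plus)
    qed simp
  qed
  also have "\<dots> = (\<integral>\<^sup>+ h\<in>state_space. ennreal (Q h * f h) \<partial>lborel) + (\<integral>\<^sup>+ h\<in>state_space. ennreal (d * f h) \<partial>lborel)"
  proof (intro nn_integral_add)
    note [measurable] = assms(3,4) fd_meas[OF assms(1)]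
    show "(\<lambda>h. ennreal (Q h * f h) * indicator state_space h) \<in> borel_measurable lborel" by simp measurable
    show "(\<lambda>h. ennreal (d * f h) * indicator state_space h) \<in> borel_measurable lborel" by simp measurable
  qed
  finally show ?thesis using E_const[OF assms(1,2)] by simp
qed

lemma kkt_ln:
  fixes g N w q :: real
  assumes "g > 0" "N > 0" "w > 0" "q \<ge> 0"
  defines "p \<equiv> max 0 (w - N/g)"
  shows "ln (1 + q*g/N) + p/w \<le> ln (1 + p*g/N) + q/w"
proof -
  have p0: "p \<ge> 0" by (simp add: p_def)
  have A: "N + p*g > 0" using assms p0 by (simp add: add_pos_nonneg)
  have e1: "1 + q*g/N = (N + q*g)/N" "1 + p*g/N = (N+p*g)/N" using assms by (auto simp: field_simps)
  have B: "N + q*g > 0" using assms by (simp add: add_pos_nonneg)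
  have "ln (1 + q*g/N) - ln (1 + p*g/N) = ln ((N+q*g)/(N+p*g))"
    unfolding e1 using A B assms(2) by (simp add: ln_div)
  also have "\<dots> \<le> (N+q*g)/(N+p*g) - 1"
    using assms A by (intro ln_le_minus_one) (simp add: add_pos_nonneg)
  also have "\<dots> = (q-p)*g/(N+p*g)" using A by (simp add: field_simps)
  also have "\<dots> \<le> (q - p)/w"
  proof (cases "w - N/g > 0")
    case True
    then have "p = w - N/g" by (simp add: p_def)
    then have "N + p*g = w*g" using assms by (simp add: field_simps)
    then show ?thesis using assms by simp
  next
    case False
    then have "p = 0" by (simp add: p_def)
    have "w \<le> N/g" using False by simp
    then have "w*g \<le> N" using assms by (simp add: field_simps)
    then have "q*g*w \<le> q*N" using assms
      by (metis mult.assoc mult.commute mult_left_mono)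
    then show ?thesis using \<open>p = 0\<close> assms by (simp add: field_simps)
  qed
  finally show ?thesis by (simp add: diff_divide_distrib)
qed

lemma kkt_pt:
  fixes g N w q :: real
  assumes "g > 0" "N > 0" "w > 0" "q \<ge> 0"
  defines "p \<equiv> max 0 (w - N/g)"
  shows "1/2 * log 2 (1 + q*g/N) + p / (2*ln 2*w) \<le> 1/2 * log 2 (1 + p*g/N) + q/(2*ln 2*w)"
proof -
  have "ln (1 + q*g/N) + p/w \<le> ln (1 + p*g/N) + q/w"
    using kkt_ln[OF assms(1-4)] by (simp add: p_def)
  then have "(ln (1 + q*g/N) + p/w) / (2*ln 2) \<le> (ln (1 + p*g/N) + q/w) / (2 * ln 2)"
    by (intro divide_right_mono) auto
  then show ?thesis by (simp add: log_def add_divide_distrib mult_ac)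
qed


lemma E_cmult:
  assumes fd: "fading_density f" and "0 \<le> c" and Pm: "P \<in> borel_measurable borel"
    and P0: "\<And>h. h \<in> state_space \<Longrightarrow> 0 \<le> P h"
  shows "(\<integral>\<^sup>+ h\<in>state_space. ennreal (c * P h * f h) \<partial>lborel) =
     ennreal c * (\<integral>\<^sup>+ h\<in>state_space. ennreal (P h * f h) \<partial>lborel)"
proof -
  have "(\<integral>\<^sup>+ h\<in>state_space. ennreal (c * P h * f h) \<partial>lborel) =
     (\<integral>\<^sup>+ h. ennreal c * (ennreal (P h * f h) * indicator state_space h) \<partial>lborel)"
    by (intro nn_integral_cong) (auto simp: indicator_def ennreal_mult assms fd_nonneg mult.assoc)
  also have "\<dots> = ennreal c * (\<integral>\<^sup>+ h\<in>state_space. ennreal (P h * f h) \<partial>lborel)"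
    using fd_meas[OF fd] Pm by (intro nn_integral_cmult) simp
  finally show ?thesis .
qed

lemma enn_sum_le: "0\<le>a \<Longrightarrow> 0\<le>b \<Longrightarrow> 0\<le>c \<Longrightarrow> 0\<le>d \<Longrightarrow> a+b \<le> c+d \<Longrightarrow> ennreal a + ennreal b \<le> ennreal c + ennreal d"
  by (metis ennreal_leI ennreal_plus)

lemma kkt_int:
  assumes fd: "fading_density f" and w: "w > 0"
    and gm: "g \<in> borel_measurable borel" and Nm: "N \<in> borel_measurable borel"
    and Pm: "P \<in> borel_measurable borel" and Qm: "Q \<in> borel_measurable borel"
    and gpos: "\<And>h. h \<in> state_space \<Longrightarrow> g h > 0"
    and Npos: "\<And>h. h \<in> state_space \<Longrightarrow> N h > 0"
    and Q0: "\<And>h. h \<in> state_space \<Longrightarrow> Q h \<ge> 0"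
    and Pdef: "\<And>h. h \<in> state_space \<Longrightarrow> P h = max 0 (w - N h / g h)"
    and EP: "(\<integral>\<^sup>+ h\<in>state_space. ennreal (P h * f h) \<partial>lborel) = ennreal Pb"
    and EQ: "(\<integral>\<^sup>+ h\<in>state_space. ennreal (Q h * f h) \<partial>lborel) \<le> ennreal Pb"
  shows "(\<integral>\<^sup>+ h\<in>state_space. ennreal (1/2 * log 2 (1 + Q h * g h / N h) * f h) \<partial>lborel)
       \<le> (\<integral>\<^sup>+ h\<in>state_space. ennreal (1/2 * log 2 (1 + P h * g h / N h) * f h) \<partial>lborel)"
proof -
  define c where "c = 1 / (2 * ln 2 * w)"
  have c0: "c \<ge> 0" using w by (simp add: c_def)
  have P0: "\<And>h. h \<in> state_space \<Longrightarrow> P h \<ge> 0" using Pdef by simp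
  let ?LQ = "\<lambda>h. 1/2 * log 2 (1 + Q h * g h / N h)"
  let ?LP = "\<lambda>h. 1/2 * log 2 (1 + P h * g h / N h)"
  have LQ0: "?LQ h \<ge> 0" if "h \<in> state_space" for h
  proof -
    have "Q h * g h / N h \<ge> 0" using Q0[OF that] gpos[OF that] Npos[OF that] by simp
    then show ?thesis by simp
  qed
  have LP0: "?LP h \<ge> 0" if "h \<in> state_space" for h
  proof -
    have "P h * g h / N h \<ge> 0" using P0[OF that] gpos[OF that] Npos[OF that] by simp
    then show ?thesis by simp
  qed
  note [measurable] = fd_meas[OF fd] gm Nm Pm Qm
  have m1: "(\<lambda>h. ennreal (?LQ h * f h) * indicator state_space h) \<in> borel_measurable borel" by measurable
  have m2: "(\<lambda>h. ennreal (?LP h * f h) * indicator state_space h) \<in> borel_measurable borel" by measurable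
  have m3: "(\<lambda>h. ennreal (c * P h * f h) * indicator state_space h) \<in> borel_measurable borel" by measurable
  have m4: "(\<lambda>h. ennreal (c * Q h * f h) * indicator state_space h) \<in> borel_measurable borel" by measurable
  have "(\<integral>\<^sup>+ h\<in>state_space. ennreal (?LQ h * f h) \<partial>lborel) + (\<integral>\<^sup>+ h\<in>state_space. ennreal (c * P h * f h) \<partial>lborel)
      = (\<integral>\<^sup>+ h. ennreal (?LQ h * f h) * indicator state_space h + ennreal (c * P h * f h) * indicator state_space h \<partial>lborel)"
    using m1 m3 by (intro nn_integral_add[symmetric]) simp_all
  also have "\<dots> \<le> (\<integral>\<^sup>+ h. ennreal (?LP h * f h) * indicator state_space h + ennreal (c * Q h * f h) * indicator state_space h \<partial>lborel)"
  proof (intro nn_integral_mono)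
    fix h show "ennreal (?LQ h * f h) * indicator state_space h + ennreal (c * P h * f h) * indicator state_space h
      \<le> ennreal (?LP h * f h) * indicator state_space h + ennreal (c * Q h * f h) * indicator state_space h"
    proof (cases "h \<in> state_space")
      case True
      note hh = gpos[OF True] Npos[OF True] Q0[OF True] P0[OF True] fd_nonneg[OF fd True] LQ0[OF True] LP0[OF True]
      have "?LQ h + P h * c \<le> ?LP h + Q h * c"
        using kkt_pt[OF gpos[OF True] Npos[OF True] w Q0[OF True]] Pdef[OF True]
        by (simp add: c_def mult.commute)
      then have "(?LQ h + P h * c) * f h \<le> (?LP h + Q h * c) * f h"
        using hh by (intro mult_right_mono) auto
      then have "?LQ h * f h + c * P h * f h \<le> ?LP h * f h + c * Q h * f h"
        by (simp add: algebra_simps)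
      then have "ennreal (?LQ h * f h) + ennreal (c * P h * f h) \<le> ennreal (?LP h * f h) + ennreal (c * Q h * f h)"
        using hh c0 by (intro enn_sum_le) auto
      then show ?thesis by (simp only: indicator_simps(1)[OF True] mult_1_right)
    next
      case False then show ?thesis by (simp only: indicator_simps(2)[OF False] mult_zero_right add_0_right order_refl)
    qed
  qed
  also have "\<dots> = (\<integral>\<^sup>+ h\<in>state_space. ennreal (?LP h * f h) \<partial>lborel) + (\<integral>\<^sup>+ h\<in>state_space. ennreal (c * Q h * f h) \<partial>lborel)"
    using m2 m4 by (intro nn_integral_add) simp_all
  finally have ineq0: "(\<integral>\<^sup>+ h\<in>state_space. ennreal (?LQ h * f h) \<partial>lborel) + (\<integral>\<^sup>+ h\<in>state_space. ennreal (c * P h * f h) \<partial>lborel)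
     \<le> (\<integral>\<^sup>+ h\<in>state_space. ennreal (?LP h * f h) \<partial>lborel) + (\<integral>\<^sup>+ h\<in>state_space. ennreal (c * Q h * f h) \<partial>lborel)" .
  have e1: "(\<integral>\<^sup>+ h\<in>state_space. ennreal (c * P h * f h) \<partial>lborel) = ennreal c * ennreal Pb"
    by (simp add: E_cmult[OF fd c0 Pm P0] EP)
  have e2: "(\<integral>\<^sup>+ h\<in>state_space. ennreal (c * Q h * f h) \<partial>lborel) \<le> ennreal c * ennreal Pb"
  proof -
    have "(\<integral>\<^sup>+ h\<in>state_space. ennreal (c * Q h * f h) \<partial>lborel) = ennreal c * (\<integral>\<^sup>+ h\<in>state_space. ennreal (Q h * f h) \<partial>lborel)"
      by (rule E_cmult[OF fd c0 Qm Q0])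
    also have "\<dots> \<le> ennreal c * ennreal Pb" using EQ by (rule mult_left_mono) simp
    finally show ?thesis .
  qed
  have ineq: "(\<integral>\<^sup>+ h\<in>state_space. ennreal (?LQ h * f h) \<partial>lborel) + ennreal c * ennreal Pb
     \<le> (\<integral>\<^sup>+ h\<in>state_space. ennreal (?LP h * f h) \<partial>lborel) + ennreal c * ennreal Pb"
  proof -
    have "(\<integral>\<^sup>+ h\<in>state_space. ennreal (?LQ h * f h) \<partial>lborel) + ennreal c * ennreal Pb
     \<le> (\<integral>\<^sup>+ h\<in>state_space. ennreal (?LP h * f h) \<partial>lborel) + (\<integral>\<^sup>+ h\<in>state_space. ennreal (c * Q h * f h) \<partial>lborel)"
      using ineq0 by (simp only: e1)
    also have "\<dots> \<le> (\<integral>\<^sup>+ h\<in>state_space. ennreal (?LP h * f h) \<partial>lborel) + ennreal c * ennreal Pb"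
      using e2 by (rule add_left_mono)
    finally show ?thesis .
  qed
  have K: "ennreal c * ennreal Pb \<noteq> \<infinity>" by (simp add: ennreal_mult_eq_top_iff)
  have "ennreal c * ennreal Pb + (\<integral>\<^sup>+ h\<in>state_space. ennreal (?LQ h * f h) \<partial>lborel)
     \<le> ennreal c * ennreal Pb + (\<integral>\<^sup>+ h\<in>state_space. ennreal (?LP h * f h) \<partial>lborel)"
    using ineq by (simp only: add.commute)
  then show ?thesis using K by (simp only: ennreal_add_left_cancel_le) simp
qed


lemma fst_meas[measurable]: "(fst :: real\<times>real \<Rightarrow> real) \<in> borel_measurable borel"
  by (intro borel_measurable_continuous_onI continuous_intros)
lemma snd_meas[measurable]: "(snd :: real\<times>real \<Rightarrow> real) \<in> borel_measurable borel"
  by (intro borel_measurable_continuous_onI continuous_intros)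

definition EE :: "(real \<times> real \<Rightarrow> real) \<Rightarrow> (real \<times> real \<Rightarrow> real) \<Rightarrow> ennreal" where
  "EE f P = (\<integral>\<^sup>+ h\<in>state_space. ennreal (P h * f h) \<partial>lborel)"

definition PA :: "real \<Rightarrow> (real \<times> real) set \<Rightarrow> real \<Rightarrow> real \<Rightarrow> real \<times> real \<Rightarrow> real" where
  "PA s D w1 w2 = (\<lambda>h. max 0 (w1 - (s + max 0 (w2 - s / snd h) * snd h * indicator D h) / fst h))"

definition PB :: "real \<Rightarrow> (real \<times> real) set \<Rightarrow> real \<Rightarrow> real \<Rightarrow> real \<times> real \<Rightarrow> real" where
  "PB s D w1 w2 = (\<lambda>h. max 0 (w2 - (s + max 0 (w1 - s / fst h) * fst h * indicator (-D) h) / snd h))"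

lemma EE_le_const:
  assumes fd: "fading_density f" and "P \<in> borel_measurable borel" "0 \<le> B"
    and "\<And>h. h \<in> state_space \<Longrightarrow> P h \<le> B"
  shows "EE f P \<le> ennreal B"
  using E_mono_lip[OF fd order_refl assms(2) _ , of "\<lambda>_. B"] E_const[OF fd assms(3)] assms(3,4)
  unfolding EE_def by simp

lemma EE_fin:
  assumes fd: "fading_density f" and "P \<in> borel_measurable borel" "0 \<le> B"
    and "\<And>h. h \<in> state_space \<Longrightarrow> P h \<le> B"
  shows "EE f P = ennreal (enn2real (EE f P))" "enn2real (EE f P) \<le> B"
proof -
  have le: "EE f P \<le> ennreal B" by (rule EE_le_const[OF assms])
  have "EE f P \<noteq> \<infinity>"
  proof
    assume "EE f P = \<infinity>" with le show False by (simp add: top_unique)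
  qed
  then show "EE f P = ennreal (enn2real (EE f P))" by (simp add: ennreal_enn2real_if)
  show "enn2real (EE f P) \<le> B" using le assms(3) by (simp add: enn2real_leI)
qed

lemma real_from_enn:
  assumes "X = ennreal a" "Y = ennreal b" "0 \<le> a" "0 \<le> b" "0 \<le> d" "X \<le> Y + ennreal d"
  shows "a \<le> b + d"
  using assms by (simp add: ennreal_plus[symmetric] del: ennreal_plus)


lemma level_exists:
  fixes G :: "real \<Rightarrow> real" and c B :: real
  assumes mono: "\<And>x y. 0 \<le> x \<Longrightarrow> x \<le> y \<Longrightarrow> G x \<le> G y"
    and lip: "\<And>x y. 0 \<le> x \<Longrightarrow> x \<le> y \<Longrightarrow> G y \<le> G x + (y - x)"
    and G0: "G 0 \<le> c" and B0: "0 \<le> B" and GB: "c < G B"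
  shows "G (Sup {x. 0 \<le> x \<and> G x \<le> c}) = c" "0 \<le> Sup {x. 0 \<le> x \<and> G x \<le> c}"
    "Sup {x. 0 \<le> x \<and> G x \<le> c} \<le> B"
proof -
  define A where "A = {x. 0 \<le> x \<and> G x \<le> c}"
  have ne: "0 \<in> A" using G0 by (simp add: A_def)
  have ub: "x \<le> B" if "x \<in> A" for x
  proof (rule ccontr)
    assume "\<not> x \<le> B"
    then have "G B \<le> G x" using B0 by (intro mono) auto
    then show False using that GB by (simp add: A_def)
  qed
  have bdd: "bdd_above A" unfolding bdd_above_def using ub by auto
  define s where "s = Sup A"
  have s0: "0 \<le> s" unfolding s_def by (rule cSup_upper2[OF ne _ bdd]) simp
  have sB: "s \<le> B" unfolding s_def using ne ub by (intro cSup_least) auto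
  have le: "G s \<le> c"
  proof (rule ccontr)
    assume "\<not> G s \<le> c"
    define e where "e = G s - c"
    have e0: "e > 0" using \<open>\<not> G s \<le> c\<close> by (simp add: e_def)
    have "s - e < Sup A" using e0 by (simp add: s_def)
    moreover have "A \<noteq> {}" using ne by auto
    ultimately obtain a where a: "a \<in> A" "s - e < a" by (rule less_cSupE)
    have as: "a \<le> s" unfolding s_def using a(1) bdd by (rule cSup_upper)
    have "G s \<le> G a + (s - a)" using a(1) as by (intro lip) (auto simp: A_def)
    moreover have "G a \<le> c" using a(1) by (simp add: A_def)
    ultimately show False using a(2) by (simp add: e_def)
  qed
  have ge: "c \<le> G s"
  proof (rule ccontr)
    assume "\<not> c \<le> G s"
    define e where "e = c - G s"
    have e0: "e > 0" using \<open>\<not> c \<le> G s\<close> by (simp add: e_def)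
    have "G (s + e/2) \<le> G s + (s + e/2 - s)" using s0 e0 by (intro lip) auto
    moreover have eG: "G s = c - e" by (simp add: e_def)
    ultimately have "G (s + e/2) \<le> c" using e0 by linarith
    then have "s + e/2 \<in> A" using s0 e0 by (simp add: A_def)
    then have "s + e/2 \<le> s" unfolding s_def using bdd by (rule cSup_upper)
    then show False using e0 by simp
  qed
  show "G (Sup {x. 0 \<le> x \<and> G x \<le> c}) = c" using le ge by (simp add: s_def A_def)
  show "0 \<le> Sup {x. 0 \<le> x \<and> G x \<le> c}" using s0 by (simp add: s_def A_def)
  show "Sup {x. 0 \<le> x \<and> G x \<le> c} \<le> B" using sB by (simp add: s_def A_def)
qed

lemma level_mono:
  fixes G G' :: "real \<Rightarrow> real" and c B' :: real
  assumes le: "\<And>x. 0 \<le> x \<Longrightarrow> G' x \<le> G x" and G0: "G 0 \<le> c"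
    and mono: "\<And>x y. 0 \<le> x \<Longrightarrow> x \<le> y \<Longrightarrow> G' x \<le> G' y"
    and B0: "0 \<le> B'" and GB: "c < G' B'"
  shows "Sup {x. 0 \<le> x \<and> G x \<le> c} \<le> Sup {x. 0 \<le> x \<and> G' x \<le> c}"
proof (rule cSup_subset_mono)
  show "{x. 0 \<le> x \<and> G x \<le> c} \<noteq> {}" using G0 by auto
  show "{x. 0 \<le> x \<and> G x \<le> c} \<subseteq> {x. 0 \<le> x \<and> G' x \<le> c}" using le by (auto intro: order_trans)
  have "x \<le> B'" if "0 \<le> x" "G' x \<le> c" for x
  proof (rule ccontr)
    assume "\<not> x \<le> B'"
    then have "G' B' \<le> G' x" using B0 by (intro mono) auto
    then show False using that GB by simp
  qed
  then show "bdd_above {x. 0 \<le> x \<and> G' x \<le> c}" unfolding bdd_above_def by auto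
qed

lemma fixpoint_mono:
  fixes g :: "real \<Rightarrow> real" and W :: real
  assumes W0: "0 \<le> W" and into: "\<And>x. 0 \<le> x \<Longrightarrow> x \<le> W \<Longrightarrow> 0 \<le> g x \<and> g x \<le> W"
    and mono: "\<And>x y. 0 \<le> x \<Longrightarrow> x \<le> y \<Longrightarrow> y \<le> W \<Longrightarrow> g x \<le> g y"
  shows "\<exists>x. 0 \<le> x \<and> x \<le> W \<and> g x = x"
proof -
  define A where "A = {x. 0 \<le> x \<and> x \<le> W \<and> x \<le> g x}"
  have ne: "0 \<in> A" using into[of 0] W0 by (simp add: A_def)
  have bdd: "bdd_above A" unfolding bdd_above_def A_def by auto
  define s where "s = Sup A"
  have s0: "0 \<le> s" unfolding s_def by (rule cSup_upper2[OF ne _ bdd]) simp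
  have sW: "s \<le> W" unfolding s_def using ne by (intro cSup_least) (auto simp: A_def)
  have up: "x \<le> s" if "x \<in> A" for x unfolding s_def using that bdd by (rule cSup_upper)
  have "s \<le> g s" unfolding s_def
  proof (rule cSup_least)
    show "A \<noteq> {}" using ne by auto
    fix x assume x: "x \<in> A"
    then have "x \<le> g x" by (simp add: A_def)
    also have "g x \<le> g s" using x up[OF x] sW by (intro mono) (auto simp: A_def)
    finally show "x \<le> g (Sup A)" by (simp add: s_def)
  qed
  moreover have "g s \<le> g (g s)" using \<open>s \<le> g s\<close> s0 into[OF s0 sW] by (intro mono) auto
  then have "g s \<in> A" using into[OF s0 sW] by (simp add: A_def)
  then have "g s \<le> s" by (rule up)
  ultimately show ?thesis using s0 sW by (intro exI[of _ s]) auto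
qed

context
  fixes f :: "real \<times> real \<Rightarrow> real" and s :: real and D :: "(real \<times> real) set"
  assumes fd: "fading_density f" and s0: "s > 0" and Dm[measurable]: "D \<in> sets borel"
begin

lemma fm[measurable]: "f \<in> borel_measurable borel" using fd by (rule fd_meas)
lemma Dind[measurable]: "indicator D \<in> borel_measurable (borel::(real\<times>real) measure)" "indicator (-D) \<in> borel_measurable (borel::(real\<times>real) measure)"
  using Dm by (auto intro: borel_measurable_indicator)

lemma PA_meas[measurable]: "PA s D w1 w2 \<in> borel_measurable borel"
  unfolding PA_def by measurable

lemma PB_meas[measurable]: "PB s D w1 w2 \<in> borel_measurable borel"
  unfolding PB_def by measurable

lemma ss_pos: "h \<in> state_space \<Longrightarrow> fst h > 0 \<and> snd h > 0"
  by (auto simp: state_space_def)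

lemma PA_nonneg: "0 \<le> PA s D w1 w2 h" by (simp add: PA_def)
lemma PB_nonneg: "0 \<le> PB s D w1 w2 h" by (simp add: PB_def)

lemma PA_le: assumes "h \<in> state_space" shows "PA s D w1 w2 h \<le> max 0 w1"
proof -
  have "0 \<le> (s + max 0 (w2 - s / snd h) * snd h * indicator D h) / fst h"
    using ss_pos[OF assms] s0 by (intro divide_nonneg_pos add_nonneg_nonneg) auto
  then show ?thesis by (simp add: PA_def)
qed

lemma PB_le: assumes "h \<in> state_space" shows "PB s D w1 w2 h \<le> max 0 w2"
proof -
  have "0 \<le> (s + max 0 (w1 - s / fst h) * fst h * indicator (-D) h) / snd h"
    using ss_pos[OF assms] s0 by (intro divide_nonneg_pos add_nonneg_nonneg) auto
  then show ?thesis by (simp add: PB_def)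
qed

lemma PA_mono: assumes "h \<in> state_space" "w1 \<le> w1'" "w2' \<le> w2"
  shows "PA s D w1 w2 h \<le> PA s D w1' w2' h"
proof -
  have "max 0 (w2' - s / snd h) * snd h * indicator D h \<le> max 0 (w2 - s / snd h) * snd h * indicator D h"
    using ss_pos[OF assms(1)] assms by (intro mult_right_mono) (auto simp: indicator_def)
  then have "(s + max 0 (w2' - s / snd h) * snd h * indicator D h) / fst h \<le> (s + max 0 (w2 - s / snd h) * snd h * indicator D h) / fst h"
    using ss_pos[OF assms(1)] by (intro divide_right_mono) auto
  then show ?thesis using assms by (simp add: PA_def)
qed

lemma PB_mono: assumes "h \<in> state_space" "w2 \<le> w2'" "w1' \<le> w1"
  shows "PB s D w1 w2 h \<le> PB s D w1' w2' h"
proof -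
  have "max 0 (w1' - s / fst h) * fst h * indicator (-D) h \<le> max 0 (w1 - s / fst h) * fst h * indicator (-D) h"
    using ss_pos[OF assms(1)] assms by (intro mult_right_mono) (auto simp: indicator_def)
  then have "(s + max 0 (w1' - s / fst h) * fst h * indicator (-D) h) / snd h \<le> (s + max 0 (w1 - s / fst h) * fst h * indicator (-D) h) / snd h"
    using ss_pos[OF assms(1)] by (intro divide_right_mono) auto
  then show ?thesis using assms by (simp add: PB_def)
qed

lemma PA_lip: "PA s D w1' w2 h \<le> PA s D w1 w2 h + \<bar>w1' - w1\<bar>"
  by (simp add: PA_def)

lemma PB_lip: "PB s D w1 w2' h \<le> PB s D w1 w2 h + \<bar>w2' - w2\<bar>"
  by (simp add: PB_def)

definition "F1 w1 w2 = enn2real (EE f (PA s D w1 w2))"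
definition "F2 w1 w2 = enn2real (EE f (PB s D w1 w2))"

lemma F1_E: "EE f (PA s D w1 w2) = ennreal (F1 w1 w2)"
  unfolding F1_def by (rule EE_fin(1)[OF fd PA_meas _ PA_le]) simp
lemma F2_E: "EE f (PB s D w1 w2) = ennreal (F2 w1 w2)"
  unfolding F2_def by (rule EE_fin(1)[OF fd PB_meas _ PB_le]) simp
lemma F1_le: "F1 w1 w2 \<le> max 0 w1"
  unfolding F1_def by (rule EE_fin(2)[OF fd PA_meas _ PA_le]) simp
lemma F2_le: "F2 w1 w2 \<le> max 0 w2"
  unfolding F2_def by (rule EE_fin(2)[OF fd PB_meas _ PB_le]) simp
lemma F1_nonneg: "0 \<le> F1 w1 w2" by (simp add: F1_def)
lemma F2_nonneg: "0 \<le> F2 w1 w2" by (simp add: F2_def)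

lemma F1_mono: assumes "w1 \<le> w1'" "w2' \<le> w2" shows "F1 w1 w2 \<le> F1 w1' w2'"
proof -
  have "EE f (PA s D w1 w2) \<le> EE f (PA s D w1' w2') + ennreal 0"
    unfolding EE_def using assms
    by (intro E_mono_lip[OF fd order_refl PA_meas PA_meas]) (auto intro: PA_mono PA_nonneg)
  from real_from_enn[OF F1_E F1_E F1_nonneg F1_nonneg order_refl this] show ?thesis by simp
qed

lemma F2_mono: assumes "w2 \<le> w2'" "w1' \<le> w1" shows "F2 w1 w2 \<le> F2 w1' w2'"
proof -
  have "EE f (PB s D w1 w2) \<le> EE f (PB s D w1' w2') + ennreal 0"
    unfolding EE_def using assms
    by (intro E_mono_lip[OF fd order_refl PB_meas PB_meas]) (auto intro: PB_mono PB_nonneg)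
  from real_from_enn[OF F2_E F2_E F2_nonneg F2_nonneg order_refl this] show ?thesis by simp
qed

lemma F1_lip: "F1 w1' w2 \<le> F1 w1 w2 + \<bar>w1' - w1\<bar>"
proof -
  have "EE f (PA s D w1' w2) \<le> EE f (PA s D w1 w2) + ennreal \<bar>w1' - w1\<bar>"
    unfolding EE_def
    by (intro E_mono_lip[OF fd _ PA_meas PA_meas]) (auto intro: PA_lip PA_nonneg)
  then show ?thesis by (intro real_from_enn[OF F1_E F1_E F1_nonneg F1_nonneg]) simp_all
qed

lemma F2_lip: "F2 w1 w2' \<le> F2 w1 w2 + \<bar>w2' - w2\<bar>"
proof -
  have "EE f (PB s D w1 w2') \<le> EE f (PB s D w1 w2) + ennreal \<bar>w2' - w2\<bar>"
    unfolding EE_def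
    by (intro E_mono_lip[OF fd _ PB_meas PB_meas]) (auto intro: PB_lip PB_nonneg)
  then show ?thesis by (intro real_from_enn[OF F2_E F2_E F2_nonneg F2_nonneg]) simp_all
qed

lemma F1_zero: "F1 0 w2 = 0" using F1_le[of 0 w2] F1_nonneg[of 0 w2] by simp
lemma F2_zero: "F2 w1 0 = 0" using F2_le[of w1 0] F2_nonneg[of w1 0] by simp


lemma Kmeas[measurable]: "({a..b} \<times> {c..d} :: (real\<times>real) set) \<in> sets borel"
  by (intro borel_closed closed_Times) auto

lemma growth2:
  assumes d0: "0 < d" and M0: "0 < M"
    and pK: "(\<integral>\<^sup>+ h\<in>state_space. ennreal (indicator ({d..M}\<times>{d..M}) h * f h) \<partial>lborel) = ennreal p" and p0: "0 \<le> p"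
  shows "p * (w2 - s/d) \<le> F2 w1 w2 + M/d * F1 w1 w2'"
proof (cases "w2 - s/d \<ge> 0")
  case False
  then have "p * (w2 - s/d) \<le> 0" using p0 by (simp add: mult_nonneg_nonpos)
  also have "0 \<le> F2 w1 w2 + M/d * F1 w1 w2'" using F1_nonneg F2_nonneg d0 M0 by simp
  finally show ?thesis .
next
  case True
  define c where "c = w2 - s/d"
  have c0: "c \<ge> 0" using True by (simp add: c_def)
  define K where "K = ({d..M}\<times>{d..M} :: (real\<times>real) set)"
  have Km[measurable]: "K \<in> sets borel" unfolding K_def by simp
  have MD: "0 \<le> M/d" using d0 M0 by simp
  have pt: "c * indicator K h \<le> PB s D w1 w2 h + M/d * PA s D w1 w2' h" if hS: "h \<in> state_space" for h
  proof (cases "h \<in> K")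
    case False
    have "0 \<le> PB s D w1 w2 h + M/d * PA s D w1 w2' h"
      by (intro add_nonneg_nonneg mult_nonneg_nonneg MD PA_nonneg PB_nonneg)
    then show ?thesis using False by simp
  next
    case True
    then have hK: "d \<le> fst h" "fst h \<le> M" "d \<le> snd h" "snd h \<le> M" unfolding K_def by auto
    have sh: "0 < snd h" using hK d0 by linarith
    have sd: "s / snd h \<le> s / d" using s0 d0 hK sh by (intro divide_left_mono) auto
    have iK: "indicator K h = (1::real)" using True by simp
    have PAn: "0 \<le> M/d * PA s D w1 w2' h" by (intro mult_nonneg_nonneg MD PA_nonneg)
    show ?thesis
    proof (cases "h \<in> D")
      case True
      have "PB s D w1 w2 h = max 0 (w2 - s / snd h)" using True by (simp add: PB_def)
      then have "c \<le> PB s D w1 w2 h" using sd unfolding c_def by linarith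
      then show ?thesis unfolding iK mult_1_right using PAn by linarith
    next
      case False
      define u where "u = max 0 (w1 - s / fst h)"
      have u0: "u \<ge> 0" by (simp add: u_def)
      have PAu: "PA s D w1 w2' h = u" using False by (simp add: PA_def u_def)
      have PBu: "PB s D w1 w2 h = max 0 (w2 - (s + u * fst h) / snd h)" using False by (simp add: PB_def u_def)
      have "(s + u * fst h) / snd h \<le> (s + u * M) / d"
      proof (rule frac_le)
        show "0 \<le> s + u * M" using s0 u0 M0 by simp
        show "s + u * fst h \<le> s + u * M" using u0 hK by (simp add: mult_left_mono)
      qed (use d0 hK in auto)
      also have "\<dots> = s/d + M/d * u" by (simp add: add_divide_distrib mult.commute)
      finally have X: "(s + u * fst h) / snd h \<le> s/d + M/d * u" .
      have Y: "w2 - (s + u * fst h) / snd h \<le> PB s D w1 w2 h" unfolding PBu by (rule max.cobounded2)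
      show ?thesis unfolding iK PAu c_def mult_1_right using X Y by linarith
    qed
  qed
  have QN: "\<And>h. 0 \<le> PB s D w1 w2 h + M/d * PA s D w1 w2' h"
    by (intro add_nonneg_nonneg mult_nonneg_nonneg MD PA_nonneg PB_nonneg)
  have "EE f (\<lambda>h. c * indicator K h) \<le> EE f (\<lambda>h. PB s D w1 w2 h + M/d * PA s D w1 w2' h) + ennreal 0"
    unfolding EE_def
    by (rule E_mono_lip[OF fd order_refl]) (measurable, measurable, metis add_0_right pt, rule QN)
  also have "EE f (\<lambda>h. PB s D w1 w2 h + M/d * PA s D w1 w2' h) =
     EE f (PB s D w1 w2) + (\<integral>\<^sup>+ h\<in>state_space. ennreal (M/d * PA s D w1 w2' h * f h) \<partial>lborel)"
  proof -
    have "EE f (\<lambda>h. PB s D w1 w2 h + M/d * PA s D w1 w2' h) =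
      (\<integral>\<^sup>+ h. ennreal (PB s D w1 w2 h * f h) * indicator state_space h + ennreal (M/d * PA s D w1 w2' h * f h) * indicator state_space h \<partial>lborel)"
      unfolding EE_def
    proof (intro nn_integral_cong)
      fix h show "ennreal ((PB s D w1 w2 h + M / d * PA s D w1 w2' h) * f h) * indicator state_space h =
         ennreal (PB s D w1 w2 h * f h) * indicator state_space h + ennreal (M / d * PA s D w1 w2' h * f h) * indicator state_space h"
      proof (cases "h \<in> state_space")
        case True
        have "0 \<le> PB s D w1 w2 h * f h" "0 \<le> M / d * PA s D w1 w2' h * f h"
          using PB_nonneg PA_nonneg MD fd_nonneg[OF fd True] by (intro mult_nonneg_nonneg; simp)+
        then show ?thesis using True by (simp add: distrib_right ennreal_plus[symmetric] del: ennreal_plus)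
      qed simp
    qed
    also have "\<dots> = EE f (PB s D w1 w2) + (\<integral>\<^sup>+ h\<in>state_space. ennreal (M/d * PA s D w1 w2' h * f h) \<partial>lborel)"
      unfolding EE_def by (intro nn_integral_add) (simp_all, measurable)
    finally show ?thesis .
  qed
  also have "(\<integral>\<^sup>+ h\<in>state_space. ennreal (M/d * PA s D w1 w2' h * f h) \<partial>lborel) = ennreal (M/d) * EE f (PA s D w1 w2')"
    unfolding EE_def by (rule E_cmult[OF fd MD PA_meas PA_nonneg])
  also have "EE f (\<lambda>h. c * indicator K h) = ennreal c * ennreal p"
  proof -
    have "EE f (\<lambda>h. c * indicator K h) = (\<integral>\<^sup>+ h\<in>state_space. ennreal (c * indicator K h * f h) \<partial>lborel)"
      unfolding EE_def ..
    also have "\<dots> = ennreal c * (\<integral>\<^sup>+ h\<in>state_space. ennreal (indicator K h * f h) \<partial>lborel)"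
      by (rule E_cmult[OF fd c0]) simp_all
    finally show ?thesis using pK unfolding K_def by simp
  qed
  finally have "ennreal c * ennreal p \<le> ennreal (F2 w1 w2) + ennreal (M/d) * ennreal (F1 w1 w2') + ennreal 0"
    unfolding F1_E F2_E .
  moreover have "ennreal c * ennreal p = ennreal (c * p)" using c0 p0 by (simp add: ennreal_mult)
  moreover have "ennreal (M/d) * ennreal (F1 w1 w2') = ennreal (M/d * F1 w1 w2')" by (rule ennreal_mult[symmetric, OF MD F1_nonneg])
  moreover have "ennreal (F2 w1 w2) + ennreal (M/d * F1 w1 w2') = ennreal (F2 w1 w2 + M/d * F1 w1 w2')"
    by (rule ennreal_plus[symmetric]) (rule F2_nonneg, intro mult_nonneg_nonneg MD F1_nonneg)
  ultimately have "ennreal (c * p) \<le> ennreal (F2 w1 w2 + M/d * F1 w1 w2')" by simp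
  then have "c * p \<le> F2 w1 w2 + M/d * F1 w1 w2'"
  proof -
    have R0: "0 \<le> F2 w1 w2 + M/d * F1 w1 w2'" by (intro add_nonneg_nonneg mult_nonneg_nonneg MD F1_nonneg F2_nonneg)
    show ?thesis using \<open>ennreal (c * p) \<le> ennreal (F2 w1 w2 + M/d * F1 w1 w2')\<close> by (simp only: ennreal_le_iff[OF R0])
  qed
  then show ?thesis by (simp add: c_def mult.commute)
qed

lemma growth1:
  assumes d0: "0 < d" and M0: "0 < M"
    and pK: "(\<integral>\<^sup>+ h\<in>state_space. ennreal (indicator ({d..M}\<times>{d..M}) h * f h) \<partial>lborel) = ennreal p" and p0: "0 \<le> p"
  shows "p * (w1 - s/d) \<le> F1 w1 w2 + M/d * F2 w1' w2"
proof (cases "w1 - s/d \<ge> 0")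
  case False
  then have "p * (w1 - s/d) \<le> 0" using p0 by (simp add: mult_nonneg_nonpos)
  also have "0 \<le> F1 w1 w2 + M/d * F2 w1' w2" using F1_nonneg F2_nonneg d0 M0 by simp
  finally show ?thesis .
next
  case True
  define c where "c = w1 - s/d"
  have c0: "c \<ge> 0" using True by (simp add: c_def)
  define K where "K = ({d..M}\<times>{d..M} :: (real\<times>real) set)"
  have Km[measurable]: "K \<in> sets borel" unfolding K_def by simp
  have MD: "0 \<le> M/d" using d0 M0 by simp
  have pt: "c * indicator K h \<le> PA s D w1 w2 h + M/d * PB s D w1' w2 h" if hS: "h \<in> state_space" for h
  proof (cases "h \<in> K")
    case False
    have "0 \<le> PA s D w1 w2 h + M/d * PB s D w1' w2 h"
      by (intro add_nonneg_nonneg mult_nonneg_nonneg MD PB_nonneg PA_nonneg)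
    then show ?thesis using False by simp
  next
    case True
    then have hK: "d \<le> snd h" "snd h \<le> M" "d \<le> fst h" "fst h \<le> M" unfolding K_def by auto
    have sh: "0 < fst h" using hK d0 by linarith
    have sd: "s / fst h \<le> s / d" using s0 d0 hK sh by (intro divide_left_mono) auto
    have iK: "indicator K h = (1::real)" using True by simp
    have PAn: "0 \<le> M/d * PB s D w1' w2 h" by (intro mult_nonneg_nonneg MD PB_nonneg)
    show ?thesis
    proof (cases "h \<notin> D")
      case True
      have "PA s D w1 w2 h = max 0 (w1 - s / fst h)" using True by (simp add: PA_def)
      then have "c \<le> PA s D w1 w2 h" using sd unfolding c_def by linarith
      then show ?thesis unfolding iK mult_1_right using PAn by linarith
    next
      case False
      define u where "u = max 0 (w2 - s / snd h)"
      have u0: "u \<ge> 0" by (simp add: u_def)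
      have PAu: "PB s D w1' w2 h = u" using False by (simp add: PB_def u_def)
      have PBu: "PA s D w1 w2 h = max 0 (w1 - (s + u * snd h) / fst h)" using False by (simp add: PA_def u_def)
      have "(s + u * snd h) / fst h \<le> (s + u * M) / d"
      proof (rule frac_le)
        show "0 \<le> s + u * M" using s0 u0 M0 by simp
        show "s + u * snd h \<le> s + u * M" using u0 hK by (simp add: mult_left_mono)
      qed (use d0 hK in auto)
      also have "\<dots> = s/d + M/d * u" by (simp add: add_divide_distrib mult.commute)
      finally have X: "(s + u * snd h) / fst h \<le> s/d + M/d * u" .
      have Y: "w1 - (s + u * snd h) / fst h \<le> PA s D w1 w2 h" unfolding PBu by (rule max.cobounded2)
      show ?thesis unfolding iK PAu c_def mult_1_right using X Y by linarith
    qed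
  qed
  have QN: "\<And>h. 0 \<le> PA s D w1 w2 h + M/d * PB s D w1' w2 h"
    by (intro add_nonneg_nonneg mult_nonneg_nonneg MD PB_nonneg PA_nonneg)
  have "EE f (\<lambda>h. c * indicator K h) \<le> EE f (\<lambda>h. PA s D w1 w2 h + M/d * PB s D w1' w2 h) + ennreal 0"
    unfolding EE_def
    by (rule E_mono_lip[OF fd order_refl]) (measurable, measurable, metis add_0_right pt, rule QN)
  also have "EE f (\<lambda>h. PA s D w1 w2 h + M/d * PB s D w1' w2 h) =
     EE f (PA s D w1 w2) + (\<integral>\<^sup>+ h\<in>state_space. ennreal (M/d * PB s D w1' w2 h * f h) \<partial>lborel)"
  proof -
    have "EE f (\<lambda>h. PA s D w1 w2 h + M/d * PB s D w1' w2 h) =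
      (\<integral>\<^sup>+ h. ennreal (PA s D w1 w2 h * f h) * indicator state_space h + ennreal (M/d * PB s D w1' w2 h * f h) * indicator state_space h \<partial>lborel)"
      unfolding EE_def
    proof (intro nn_integral_cong)
      fix h show "ennreal ((PA s D w1 w2 h + M / d * PB s D w1' w2 h) * f h) * indicator state_space h =
         ennreal (PA s D w1 w2 h * f h) * indicator state_space h + ennreal (M / d * PB s D w1' w2 h * f h) * indicator state_space h"
      proof (cases "h \<in> state_space")
        case True
        have "0 \<le> PA s D w1 w2 h * f h" "0 \<le> M / d * PB s D w1' w2 h * f h"
          using PA_nonneg PB_nonneg MD fd_nonneg[OF fd True] by (intro mult_nonneg_nonneg; simp)+
        then show ?thesis using True by (simp add: distrib_right ennreal_plus[symmetric] del: ennreal_plus)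
      qed simp
    qed
    also have "\<dots> = EE f (PA s D w1 w2) + (\<integral>\<^sup>+ h\<in>state_space. ennreal (M/d * PB s D w1' w2 h * f h) \<partial>lborel)"
      unfolding EE_def by (intro nn_integral_add) (simp_all, measurable)
    finally show ?thesis .
  qed
  also have "(\<integral>\<^sup>+ h\<in>state_space. ennreal (M/d * PB s D w1' w2 h * f h) \<partial>lborel) = ennreal (M/d) * EE f (PB s D w1' w2)"
    unfolding EE_def by (rule E_cmult[OF fd MD PB_meas PB_nonneg])
  also have "EE f (\<lambda>h. c * indicator K h) = ennreal c * ennreal p"
  proof -
    have "EE f (\<lambda>h. c * indicator K h) = (\<integral>\<^sup>+ h\<in>state_space. ennreal (c * indicator K h * f h) \<partial>lborel)"
      unfolding EE_def ..
    also have "\<dots> = ennreal c * (\<integral>\<^sup>+ h\<in>state_space. ennreal (indicator K h * f h) \<partial>lborel)"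
      by (rule E_cmult[OF fd c0]) simp_all
    finally show ?thesis using pK unfolding K_def by simp
  qed
  finally have "ennreal c * ennreal p \<le> ennreal (F1 w1 w2) + ennreal (M/d) * ennreal (F2 w1' w2) + ennreal 0"
    unfolding F1_E F2_E .
  moreover have "ennreal c * ennreal p = ennreal (c * p)" using c0 p0 by (simp add: ennreal_mult)
  moreover have "ennreal (M/d) * ennreal (F2 w1' w2) = ennreal (M/d * F2 w1' w2)" by (rule ennreal_mult[symmetric, OF MD F2_nonneg])
  moreover have "ennreal (F1 w1 w2) + ennreal (M/d * F2 w1' w2) = ennreal (F1 w1 w2 + M/d * F2 w1' w2)"
    by (rule ennreal_plus[symmetric]) (rule F1_nonneg, intro mult_nonneg_nonneg MD F2_nonneg)
  ultimately have "ennreal (c * p) \<le> ennreal (F1 w1 w2 + M/d * F2 w1' w2)" by simp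
  then have "c * p \<le> F1 w1 w2 + M/d * F2 w1' w2"
  proof -
    have R0: "0 \<le> F1 w1 w2 + M/d * F2 w1' w2" by (intro add_nonneg_nonneg mult_nonneg_nonneg MD F1_nonneg F2_nonneg)
    show ?thesis using \<open>ennreal (c * p) \<le> ennreal (F1 w1 w2 + M/d * F2 w1' w2)\<close> by (simp only: ennreal_le_iff[OF R0])
  qed
  then show ?thesis by (simp add: c_def mult.commute)
qed


lemma exists_K:
  "\<exists>d M p. 0 < d \<and> 0 < M \<and> 0 < p \<and>
     (\<integral>\<^sup>+ h\<in>state_space. ennreal (indicator ({d..M}\<times>{d..M}) h * f h) \<partial>lborel) = ennreal p"
proof -
  define Kn where "Kn n = {1/real (Suc n)..real (Suc n)} \<times> {1/real (Suc n)..real (Suc n)}" for n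
  define G where "G n = (\<integral>\<^sup>+ h\<in>state_space. ennreal (indicator (Kn n) h * f h) \<partial>lborel)" for n
  have Knm[measurable]: "Kn n \<in> sets borel" for n unfolding Kn_def by simp
  have cover: "\<exists>n. h \<in> Kn n" if "h \<in> state_space" for h
  proof -
    obtain a b where hab: "h = (a, b)" by (cases h)
    have ab: "0 < a" "0 < b" using that hab by (auto simp: state_space_def)
    obtain n1 where n1: "inverse (real n1) < min a b" "n1 > 0" using ex_inverse_of_nat_less[of "min a b"] ab by auto
    obtain n2 where n2: "max a b < real n2" using reals_Archimedean2 by blast
    define n where "n = n1 + n2"
    have "1 / real (Suc n) \<le> 1 / real n1" unfolding n_def using n1(2) by (intro divide_left_mono) auto
    then have lo: "1 / real (Suc n) \<le> min a b" using n1 by (simp add: inverse_eq_divide)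
    have hi: "max a b \<le> real (Suc n)" using n2 unfolding n_def by simp
    show ?thesis using lo hi unfolding hab Kn_def by (intro exI[of _ n]) auto
  qed
  have "\<exists>n. G n \<noteq> 0"
  proof (rule ccontr)
    assume "\<not> (\<exists>n. G n \<noteq> 0)"
    then have Z: "G n = 0" for n by auto
    have "AE h in lborel. ennreal (indicator (Kn n) h * f h) * indicator state_space h = 0" for n
      using Z[of n] unfolding G_def by (subst (asm) nn_integral_0_iff_AE) (simp_all, measurable)
    then have "AE h in lborel. \<forall>n. ennreal (indicator (Kn n) h * f h) * indicator state_space h = 0"
      by (simp only: AE_all_countable) blast
    then have "AE h in lborel. ennreal (f h) * indicator state_space h = 0"
    proof (rule AE_mp, intro AE_I2 impI)
      fix h assume A: "\<forall>n. ennreal (indicator (Kn n) h * f h) * indicator state_space h = 0"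
      show "ennreal (f h) * indicator state_space h = 0"
      proof (cases "h \<in> state_space")
        case True
        then obtain n where "h \<in> Kn n" using cover by blast
        then show ?thesis using A[rule_format, of n] True by simp
      qed simp
    qed
    then have "(\<integral>\<^sup>+ h\<in>state_space. ennreal (f h) \<partial>lborel) = 0"
      by (subst nn_integral_0_iff_AE) (simp_all, measurable)
    then show False using fd_one[OF fd] by simp
  qed
  then obtain n where n: "G n \<noteq> 0" by blast
  have "G n \<le> (\<integral>\<^sup>+ h\<in>state_space. ennreal (f h) \<partial>lborel)"
    unfolding G_def by (intro nn_integral_mono) (auto simp: indicator_def intro!: ennreal_leI)
  then have G1: "G n \<le> 1" using fd_one[OF fd] by simp
  then have Gfin: "G n \<noteq> \<infinity>" by (auto simp: top_unique)
  define p where "p = enn2real (G n)"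
  have Gp: "G n = ennreal p" unfolding p_def using Gfin by (simp add: ennreal_enn2real_if)
  have p0: "0 < p" using n Gp by (cases "p > 0") (auto simp: ennreal_eq_0_iff)
  show ?thesis
    by (intro exI[of _ "1/real (Suc n)"] exI[of _ "real (Suc n)"] exI[of _ p]) (use p0 Gp in \<open>auto simp: G_def Kn_def\<close>)
qed


lemma levels_exist:
  assumes Pb1: "0 < Pb1" and Pb2: "0 < Pb2"
  shows "\<exists>w1 w2. 0 < w1 \<and> 0 < w2 \<and> F1 w1 w2 = Pb1 \<and> F2 w1 w2 = Pb2"
proof -
  obtain d M p where d0: "0 < d" and M0: "0 < M" and p0: "0 < p"
    and pK: "(\<integral>\<^sup>+ h\<in>state_space. ennreal (indicator ({d..M}\<times>{d..M}) h * f h) \<partial>lborel) = ennreal p"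
    using exists_K by blast
  have MD: "0 \<le> M/d" using d0 M0 by simp
  have sd: "0 \<le> s/d" using s0 d0 by simp
  define phi where "phi w2 = Sup {x. 0 \<le> x \<and> F1 x w2 \<le> Pb1}" for w2
  define psi where "psi w1 = Sup {x. 0 \<le> x \<and> F2 w1 x \<le> Pb2}" for w1
  define B1 where "B1 w2 = s/d + (Pb1 + M/d * max 0 w2 + 1)/p" for w2
  define B2 where "B2 w1 = s/d + (Pb2 + M/d * max 0 w1 + 1)/p" for w1
  have B1: "0 \<le> B1 w2" "Pb1 < F1 (B1 w2) w2" for w2
  proof -
    have "0 \<le> M/d * max 0 w2" using MD by (intro mult_nonneg_nonneg) auto
    then show "0 \<le> B1 w2" unfolding B1_def using p0 Pb1
      by (intro add_nonneg_nonneg[OF sd] divide_nonneg_pos) auto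
    have "p * (B1 w2 - s/d) \<le> F1 (B1 w2) w2 + M/d * F2 0 w2" by (rule growth1[OF d0 M0 pK less_imp_le[OF p0]])
    moreover have "p * (B1 w2 - s/d) = Pb1 + M/d * max 0 w2 + 1" unfolding B1_def using p0 by simp
    moreover have "M/d * F2 0 w2 \<le> M/d * max 0 w2" by (rule mult_left_mono[OF F2_le MD])
    ultimately show "Pb1 < F1 (B1 w2) w2" by linarith
  qed
  have B2: "0 \<le> B2 w1" "Pb2 < F2 w1 (B2 w1)" for w1
  proof -
    have "0 \<le> M/d * max 0 w1" using MD by (intro mult_nonneg_nonneg) auto
    then show "0 \<le> B2 w1" unfolding B2_def using p0 Pb2
      by (intro add_nonneg_nonneg[OF sd] divide_nonneg_pos) auto
    have "p * (B2 w1 - s/d) \<le> F2 w1 (B2 w1) + M/d * F1 w1 0" by (rule growth2[OF d0 M0 pK less_imp_le[OF p0]])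
    moreover have "p * (B2 w1 - s/d) = Pb2 + M/d * max 0 w1 + 1" unfolding B2_def using p0 by simp
    moreover have "M/d * F1 w1 0 \<le> M/d * max 0 w1" by (rule mult_left_mono[OF F1_le MD])
    ultimately show "Pb2 < F2 w1 (B2 w1)" by linarith
  qed
  have F1m: "\<And>x y. 0 \<le> x \<Longrightarrow> x \<le> y \<Longrightarrow> F1 x w2 \<le> F1 y w2" for w2 using F1_mono by simp
  have F1l: "\<And>x y. 0 \<le> x \<Longrightarrow> x \<le> y \<Longrightarrow> F1 y w2 \<le> F1 x w2 + (y - x)" for w2
    using F1_lip by (metis abs_of_nonneg diff_ge_0_iff_ge)
  have F2m: "\<And>x y. 0 \<le> x \<Longrightarrow> x \<le> y \<Longrightarrow> F2 w1 x \<le> F2 w1 y" for w1 using F2_mono by simp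
  have F2l: "\<And>x y. 0 \<le> x \<Longrightarrow> x \<le> y \<Longrightarrow> F2 w1 y \<le> F2 w1 x + (y - x)" for w1
    using F2_lip by (metis abs_of_nonneg diff_ge_0_iff_ge)
  have phi: "F1 (phi w2) w2 = Pb1" "0 \<le> phi w2" for w2
    using level_exists[OF F1m F1l _ B1(1) B1(2), of w2] F1_zero Pb1 unfolding phi_def by auto
  have psi: "F2 w1 (psi w1) = Pb2" "0 \<le> psi w1" for w1
    using level_exists[OF F2m F2l _ B2(1) B2(2), of w1] F2_zero Pb2 unfolding psi_def by auto
  define W where "W = s/d + (Pb2 + M/d * Pb1 + 1)/p"
  have "0 \<le> M/d * Pb1" using MD Pb1 by (intro mult_nonneg_nonneg) auto
  then have W0: "0 \<le> W" unfolding W_def using p0 Pb2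
    by (intro add_nonneg_nonneg[OF sd] divide_nonneg_pos) auto
  have psiW: "psi (phi w2) \<le> W" for w2
  proof -
    have "p * (W - s/d) \<le> F2 (phi w2) W + M/d * F1 (phi w2) w2" by (rule growth2[OF d0 M0 pK less_imp_le[OF p0]])
    then have "p * (W - s/d) \<le> F2 (phi w2) W + M/d * Pb1" by (simp only: phi(1))
    moreover have "p * (W - s/d) = Pb2 + M/d * Pb1 + 1" unfolding W_def using p0 by simp
    ultimately have "Pb2 < F2 (phi w2) W" by linarith
    then show ?thesis
      using level_exists(3)[OF F2m F2l _ W0, of "phi w2" Pb2] F2_zero Pb2 unfolding psi_def by auto
  qed
  have phimono: "phi x \<le> phi y" if "x \<le> y" for x y
  proof -
    have "Sup {z. 0 \<le> z \<and> F1 z x \<le> Pb1} \<le> Sup {z. 0 \<le> z \<and> F1 z y \<le> Pb1}"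
    proof (rule level_mono[where G="\<lambda>z. F1 z x" and G'="\<lambda>z. F1 z y" and B'="B1 y"])
      show "\<And>z. 0 \<le> z \<Longrightarrow> F1 z y \<le> F1 z x" using that by (intro F1_mono) auto
    qed (use F1m F1_zero Pb1 B1 in auto)
    then show ?thesis by (simp add: phi_def)
  qed
  have psimono: "psi x \<le> psi y" if "x \<le> y" for x y
  proof -
    have "Sup {z. 0 \<le> z \<and> F2 x z \<le> Pb2} \<le> Sup {z. 0 \<le> z \<and> F2 y z \<le> Pb2}"
    proof (rule level_mono[where G="\<lambda>z. F2 x z" and G'="\<lambda>z. F2 y z" and B'="B2 y"])
      show "\<And>z. 0 \<le> z \<Longrightarrow> F2 y z \<le> F2 x z" using that by (intro F2_mono) auto
    qed (use F2m F2_zero Pb2 B2 in auto)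
    then show ?thesis by (simp add: psi_def)
  qed
  obtain w2 where w2: "0 \<le> w2" "w2 \<le> W" "psi (phi w2) = w2"
    using fixpoint_mono[OF W0, of "\<lambda>x. psi (phi x)"] psi(2) psiW phimono psimono by auto
  define w1 where "w1 = phi w2"
  have e1: "F1 w1 w2 = Pb1" unfolding w1_def by (rule phi(1))
  have e2: "F2 w1 w2 = Pb2" using psi(1)[of w1] w2(3) unfolding w1_def by simp
  have "0 < w1" using F1_le[of w1 w2] e1 Pb1 by linarith
  moreover have "0 < w2" using F2_le[of w1 w2] e2 Pb2 by linarith
  ultimately show ?thesis using e1 e2 by blast
qed

end


lemma ss_pos': "h \<in> state_space \<Longrightarrow> fst h > 0 \<and> snd h > 0"
  by (auto simp: state_space_def)

theorem theorem2:
  fixes f :: "real \<times> real \<Rightarrow> real" and \<sigma>2 Pbar1 Pbar2 :: real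
    and D1 :: "(real \<times> real) set"
  assumes "fading_density f"
    and "\<sigma>2 > 0" and "Pbar1 > 0" and "Pbar2 > 0"
    and "D1 \<in> sets borel" and "D1 \<subseteq> state_space"
  shows "\<exists>P1 P2. nash_equilibrium f \<sigma>2 Pbar1 Pbar2 D1 P1 P2"
proof -
  note fd = assms(1) and s0 = assms(2) and Dm = assms(5)
  obtain w1 w2 where w: "0 < w1" "0 < w2" "F1 f \<sigma>2 D1 w1 w2 = Pbar1" "F2 f \<sigma>2 D1 w1 w2 = Pbar2"
    using levels_exist[OF fd s0 Dm assms(3,4)] by blast
  define P1 where "P1 = PA \<sigma>2 D1 w1 w2"
  define P2 where "P2 = PB \<sigma>2 D1 w1 w2"
  have P1m: "P1 \<in> borel_measurable borel" unfolding P1_def by (rule PA_meas[OF fd s0 Dm])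
  have P2m: "P2 \<in> borel_measurable borel" unfolding P2_def by (rule PB_meas[OF fd s0 Dm])
  have P10: "\<And>h. 0 \<le> P1 h" unfolding P1_def by (rule PA_nonneg[OF fd s0 Dm])
  have P20: "\<And>h. 0 \<le> P2 h" unfolding P2_def by (rule PB_nonneg[OF fd s0 Dm])
  have E1: "EE f P1 = ennreal Pbar1" using F1_E[OF fd s0 Dm, of w1 w2] w(3) unfolding P1_def by simp
  have E2: "EE f P2 = ennreal Pbar2" using F2_E[OF fd s0 Dm, of w1 w2] w(4) unfolding P2_def by simp
  have feas1: "feasible f Pbar1 P1" unfolding feasible_def using P1m P10 E1 by (simp add: EE_def)
  have feas2: "feasible f Pbar2 P2" unfolding feasible_def using P2m P20 E2 by (simp add: EE_def)
  have Pdef1: "P1 h = max 0 (w1 - (\<sigma>2 + P2 h * snd h * indicator D1 h) / fst h)" for h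
    by (cases "h \<in> D1") (simp_all add: P1_def P2_def PA_def PB_def)
  have Pdef2: "P2 h = max 0 (w2 - (\<sigma>2 + P1 h * fst h * indicator (-D1) h) / snd h)" for h
    by (cases "h \<in> D1") (simp_all add: P1_def P2_def PA_def PB_def)
  have N1pos: "0 < \<sigma>2 + P2 h * snd h * indicator D1 h" if "h \<in> state_space" for h
  proof -
    have "0 \<le> P2 h * snd h * indicator D1 h" using P20[of h] ss_pos'[OF that] by (intro mult_nonneg_nonneg) auto
    then show ?thesis using s0 by linarith
  qed
  have N2pos: "0 < \<sigma>2 + P1 h * fst h * indicator (-D1) h" if "h \<in> state_space" for h
  proof -
    have "0 \<le> P1 h * fst h * indicator (-D1) h" using P10[of h] ss_pos'[OF that] by (intro mult_nonneg_nonneg) auto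
    then show ?thesis using s0 by linarith
  qed
  note [measurable] = P1m P2m Dm
  have N1m: "(\<lambda>h. \<sigma>2 + P2 h * snd h * indicator D1 h) \<in> borel_measurable borel" by measurable
  have N2m: "(\<lambda>h. \<sigma>2 + P1 h * fst h * indicator (-D1) h) \<in> borel_measurable borel" by measurable
  have BR1: "rate1 f \<sigma>2 D1 Q1 P2 \<le> rate1 f \<sigma>2 D1 P1 P2" if Q: "feasible f Pbar1 Q1" for Q1
  proof -
    have Qm: "Q1 \<in> borel_measurable borel" and Q0: "\<And>h. h \<in> state_space \<Longrightarrow> 0 \<le> Q1 h"
      and EQ: "(\<integral>\<^sup>+ h\<in>state_space. ennreal (Q1 h * f h) \<partial>lborel) \<le> ennreal Pbar1"
      using Q unfolding feasible_def by auto
    show ?thesis unfolding rate1_def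
      by (rule kkt_int[OF fd w(1) fst_meas N1m P1m Qm _ N1pos Q0 Pdef1 E1[unfolded EE_def] EQ])
         (use ss_pos' in auto)
  qed
  have BR2: "rate2 f \<sigma>2 D1 P1 Q2 \<le> rate2 f \<sigma>2 D1 P1 P2" if Q: "feasible f Pbar2 Q2" for Q2
  proof -
    have Qm: "Q2 \<in> borel_measurable borel" and Q0: "\<And>h. h \<in> state_space \<Longrightarrow> 0 \<le> Q2 h"
      and EQ: "(\<integral>\<^sup>+ h\<in>state_space. ennreal (Q2 h * f h) \<partial>lborel) \<le> ennreal Pbar2"
      using Q unfolding feasible_def by auto
    show ?thesis unfolding rate2_def
      by (rule kkt_int[OF fd w(2) snd_meas N2m P2m Qm _ N2pos Q0 Pdef2 E2[unfolded EE_def] EQ])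
         (use ss_pos' in auto)
  qed
  have "nash_equilibrium f \<sigma>2 Pbar1 Pbar2 D1 P1 P2"
    unfolding nash_equilibrium_def using feas1 feas2 BR1 BR2 by blast
  then show ?thesis by blast
qed

end
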